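(* Let $a,b\in\mathbb{Z}$ with $a^2-b^2\neq 0$, and let $G$ be the finite abelian group presented by the matrix $\begin{pmatrix} a & b\\ b & a\end{pmatrix}$, i.e. $G=\mathbb{Z}^2/\operatorname{im}\begin{pmatrix} a & b\\ b & a\end{pmatrix}$. Then either $G$ has an element of order $16$, or in the canonical decomposition of $G$ both the number of summands isomorphic to $\mathbb{Z}_2$ and the number of summands isomorphic to $\mathbb{Z}_4$ are even.
   Context: The canonical decomposition of a finite abelian group is its unique decomposition as a direct sum of cyclic groups of prime-power orders. *)

theory Defs
  imports "HOL-Algebra.Algebra" "HOL-Computational_Algebra.Primes"
begin

definition matrix_image :: "int \<Rightarrow> int \<Rightarrow> (int \<times> int) set" where
  "matrix_image a b = {(a * x + b * y, b * x + a * y) | x y. True}"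

definition presented_group :: "int \<Rightarrow> int \<Rightarrow> (int \<times> int) set monoid" where
  "presented_group a b = (integer_group \<times>\<times> integer_group) Mod matrix_image a b"

definition prime_power :: "nat \<Rightarrow> bool" where
  "prime_power q \<longleftrightarrow> (\<exists>p k. Factorial_Ring.prime (p::nat) \<and> k \<ge> 1 \<and> q = p ^ k)"

end

theory Submission
  imports Defs
begin

definition cnt :: "('a, 'b) monoid_scheme \<Rightarrow> nat \<Rightarrow> nat" where
  "cnt G n = card {x \<in> carrier G. x [^]\<^bsub>G\<^esub> n = \<one>\<^bsub>G\<^esub>}"

lemma cnt_iso:
  assumes G: "group G" and H: "group H" and h: "h \<in> iso G H"
  shows "cnt G n = cnt H n"
proof -
  have hom: "h \<in> hom G H" and inj: "inj_on h (carrier G)" and surj: "h ` carrier G = carrier H"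
    using h unfolding iso_iff by blast+
  have gh: "group_hom G H h" unfolding group_hom_def group_hom_axioms_def using G H hom by blast
  have pw: "h (x [^]\<^bsub>G\<^esub> n) = h x [^]\<^bsub>H\<^esub> n" if "x \<in> carrier G" for x
    by (rule group_hom.hom_nat_pow[OF gh that])
  have one: "h \<one>\<^bsub>G\<^esub> = \<one>\<^bsub>H\<^esub>" by (rule group_hom.hom_one[OF gh])
  have MG: "monoid G" by (rule group.is_monoid[OF G])
  have "h ` {x \<in> carrier G. x [^]\<^bsub>G\<^esub> n = \<one>\<^bsub>G\<^esub>} = {y \<in> carrier H. y [^]\<^bsub>H\<^esub> n = \<one>\<^bsub>H\<^esub>}"
  proof (intro equalityI subsetI)
    fix y assume "y \<in> h ` {x \<in> carrier G. x [^]\<^bsub>G\<^esub> n = \<one>\<^bsub>G\<^esub>}"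
    then obtain x where x: "x \<in> carrier G" "x [^]\<^bsub>G\<^esub> n = \<one>\<^bsub>G\<^esub>" "y = h x" by blast
    have "y \<in> carrier H" using x(1) x(3) surj by blast
    moreover have "y [^]\<^bsub>H\<^esub> n = \<one>\<^bsub>H\<^esub>" using pw[OF x(1)] one x(2) x(3) by simp
    ultimately show "y \<in> {y \<in> carrier H. y [^]\<^bsub>H\<^esub> n = \<one>\<^bsub>H\<^esub>}" by blast
  next
    fix y assume y: "y \<in> {y \<in> carrier H. y [^]\<^bsub>H\<^esub> n = \<one>\<^bsub>H\<^esub>}"
    then have "y \<in> carrier H" by blast
    then obtain x where x: "x \<in> carrier G" "y = h x" using surj by blast
    have "h (x [^]\<^bsub>G\<^esub> n) = h \<one>\<^bsub>G\<^esub>" using pw[OF x(1)] one y x(2) by simp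
    moreover have "x [^]\<^bsub>G\<^esub> n \<in> carrier G" by (rule monoid.nat_pow_closed[OF MG x(1)])
    moreover have "\<one>\<^bsub>G\<^esub> \<in> carrier G" by (rule monoid.one_closed[OF MG])
    ultimately have "x [^]\<^bsub>G\<^esub> n = \<one>\<^bsub>G\<^esub>" by (rule inj_onD[OF inj])
    then show "y \<in> h ` {x \<in> carrier G. x [^]\<^bsub>G\<^esub> n = \<one>\<^bsub>G\<^esub>}" using x by blast
  qed
  moreover have "inj_on h {x \<in> carrier G. x [^]\<^bsub>G\<^esub> n = \<one>\<^bsub>G\<^esub>}"
    by (rule inj_on_subset[OF inj]) blast
  ultimately show ?thesis unfolding cnt_def
  proof -
    assume e: "h ` {x \<in> carrier G. x [^]\<^bsub>G\<^esub> n = \<one>\<^bsub>G\<^esub>} = {y \<in> carrier H. y [^]\<^bsub>H\<^esub> n = \<one>\<^bsub>H\<^esub>}"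
       and i: "inj_on h {x \<in> carrier G. x [^]\<^bsub>G\<^esub> n = \<one>\<^bsub>G\<^esub>}"
    have "card (h ` {x \<in> carrier G. x [^]\<^bsub>G\<^esub> n = \<one>\<^bsub>G\<^esub>}) = card {x \<in> carrier G. x [^]\<^bsub>G\<^esub> n = \<one>\<^bsub>G\<^esub>}"
      by (rule card_image[OF i])
    then show "card {x \<in> carrier G. x [^]\<^bsub>G\<^esub> n = \<one>\<^bsub>G\<^esub>} = card {y \<in> carrier H. y [^]\<^bsub>H\<^esub> n = \<one>\<^bsub>H\<^esub>}"
      unfolding e by (rule sym)
  qed
qed

lemma DirProd_pow:
  "(x, y) [^]\<^bsub>G \<times>\<times> H\<^esub> (n::nat) = (x [^]\<^bsub>G\<^esub> n, y [^]\<^bsub>H\<^esub> n)"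
proof (induction n)
  case 0 show ?case by (simp only: nat_pow_0 one_DirProd)
next
  case (Suc n) show ?case by (simp only: nat_pow_Suc Suc mult_DirProd)
qed
lemma cnt_DirProd_set:
 "{z \<in> carrier (G \<times>\<times> H). z [^]\<^bsub>G \<times>\<times> H\<^esub> (n::nat) = \<one>\<^bsub>G \<times>\<times> H\<^esub>}
     = {x \<in> carrier G. x [^]\<^bsub>G\<^esub> n = \<one>\<^bsub>G\<^esub>} \<times> {y \<in> carrier H. y [^]\<^bsub>H\<^esub> n = \<one>\<^bsub>H\<^esub>}"
proof (intro equalityI subsetI)
  fix z assume "z \<in> {z \<in> carrier (G \<times>\<times> H). z [^]\<^bsub>G \<times>\<times> H\<^esub> (n::nat) = \<one>\<^bsub>G \<times>\<times> H\<^esub>}"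
  moreover obtain a b where z: "z = (a, b)" by fastforce
  ultimately show "z \<in> {x \<in> carrier G. x [^]\<^bsub>G\<^esub> n = \<one>\<^bsub>G\<^esub>} \<times> {y \<in> carrier H. y [^]\<^bsub>H\<^esub> n = \<one>\<^bsub>H\<^esub>}"
    by (simp only: DirProd_pow mem_Collect_eq carrier_DirProd mem_Sigma_iff one_DirProd prod.inject) 
next
  fix z assume "z \<in> {x \<in> carrier G. x [^]\<^bsub>G\<^esub> n = \<one>\<^bsub>G\<^esub>} \<times> {y \<in> carrier H. y [^]\<^bsub>H\<^esub> n = \<one>\<^bsub>H\<^esub>}"
  moreover obtain a b where z: "z = (a, b)" by fastforce
  ultimately show "z \<in> {z \<in> carrier (G \<times>\<times> H). z [^]\<^bsub>G \<times>\<times> H\<^esub> (n::nat) = \<one>\<^bsub>G \<times>\<times> H\<^esub>}"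
    by (simp only: DirProd_pow mem_Collect_eq carrier_DirProd mem_Sigma_iff one_DirProd prod.inject) 
qed

lemma cnt_DirProd: "cnt (G \<times>\<times> H) n = cnt G n * cnt H n"
  unfolding cnt_def cnt_DirProd_set by (simp add: card_cartesian_product)

lemma cnt_DirProd_list_Cons:
  assumes "group G" "\<And>i. i < length Gs \<Longrightarrow> group (Gs ! i)"
  shows "cnt (DirProd_list (G # Gs)) n = cnt G n * cnt (DirProd_list Gs) n"
proof -
  have g1: "group (DirProd_list Gs)" by (rule DirProd_list_is_group) (rule assms(2))
  have g2: "group (G \<times>\<times> DirProd_list Gs)" by (rule DirProd_group[OF assms(1) g1])
  have "\<And>i. i < length (G # Gs) \<Longrightarrow> group ((G # Gs) ! i)"
  proof -
    fix i assume "i < length (G # Gs)"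
    then show "group ((G # Gs) ! i)" using assms by (cases i) simp_all
  qed
  then have g3: "group (DirProd_list (G # Gs))" by (rule DirProd_list_is_group)
  have "cnt (DirProd_list (G # Gs)) n = cnt (G \<times>\<times> DirProd_list Gs) n"
    by (rule sym, rule cnt_iso[OF g2 g3 DirProd_list_iso])
  also have "\<dots> = cnt G n * cnt (DirProd_list Gs) n" by (rule cnt_DirProd)
  finally show ?thesis .
qed

lemma cnt_DirProd_list_Nil: "cnt (DirProd_list []) n = 1"
proof -
  have "x [^]\<^bsub>nil_monoid\<^esub> (n::nat) = []" for x :: "'a list"
    by (cases n) (simp_all only: nat_pow_0 nat_pow_Suc monoid.simps)
  then have "{x \<in> carrier (DirProd_list []). x [^]\<^bsub>DirProd_list []\<^esub> n = \<one>\<^bsub>DirProd_list []\<^esub>} = {[]::'a list}"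
    unfolding DirProd_list_def foldr_Nil id_apply by auto
  then show ?thesis unfolding cnt_def by (subst \<open>_ = {[]}\<close>) simp
qed

lemma cnt_mod_group:
  assumes "q > 0"
  shows "cnt (integer_mod_group q) n = gcd n q"
proof -
  define g where "g = gcd n q"
  have gpos: "g > 0" using assms g_def by simp
  obtain q' where q': "q = g * q'" unfolding g_def by (metis gcd_dvd2 dvdE)
  obtain n' where n': "n = g * n'" unfolding g_def by (metis gcd_dvd1 dvdE)
  have "g * gcd n' q' = gcd (g * n') (g * q')" by (rule gcd_mult_distrib_nat)
  also have "\<dots> = gcd n q" by (simp only: n'[symmetric] q'[symmetric])
  finally have "g * gcd n' q' = g" unfolding g_def .
  then have cop: "coprime n' q'" using gpos by (simp add: coprime_iff_gcd_eq_1)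
  have key: "(int q dvd int n * x) \<longleftrightarrow> int q' dvd x" for x :: int
  proof -
    have "(int q dvd int n * x) \<longleftrightarrow> int g * int q' dvd int g * (int n' * x)"
      using q' n' by (simp add: ac_simps)
    also have "\<dots> \<longleftrightarrow> int q' dvd int n' * x" using gpos by simp
    also have "\<dots> \<longleftrightarrow> int q' dvd x" using cop
    proof -
      have "coprime (int q') (int n')" using cop by (simp add: coprime_commute)
      then show ?thesis by (simp add: coprime_dvd_mult_right_iff)
    qed
    finally show ?thesis .
  qed
  have qpos': "q' > 0" using q' assms by (simp add: gr0I)
  have qq: "int q = int q' * int g" unfolding q' by (simp only: of_nat_mult mult.commute)
  have mem: "x \<in> {x \<in> carrier (integer_mod_group q). x [^]\<^bsub>integer_mod_group q\<^esub> n = \<one>\<^bsub>integer_mod_group q\<^esub>}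
      \<longleftrightarrow> 0 \<le> x \<and> x < int q \<and> int q dvd int n * x" for x
  proof -
    have "carrier (integer_mod_group q) = {0..<int q}" using assms by (simp add: carrier_integer_mod_group)
    then show ?thesis by (simp only: mem_Collect_eq pow_integer_mod_group one_integer_mod_group
        dvd_eq_mod_eq_0 atLeastLessThan_iff conj_assoc)
  qed
  have "{x \<in> carrier (integer_mod_group q). x [^]\<^bsub>integer_mod_group q\<^esub> n = \<one>\<^bsub>integer_mod_group q\<^esub>}
        = (\<lambda>k. int q' * int k) ` {0..<g}"
  proof (intro equalityI subsetI)
    fix x assume "x \<in> {x \<in> carrier (integer_mod_group q). x [^]\<^bsub>integer_mod_group q\<^esub> n = \<one>\<^bsub>integer_mod_group q\<^esub>}"
    then have x: "0 \<le> x" "x < int q" "int q dvd int n * x" using mem by blast+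
    then have "int q' dvd x" using key by blast
    then obtain k where k: "x = int q' * k" unfolding dvd_def by blast
    have q'pos: "int q' > 0" using qpos' by simp
    have "k \<ge> 0" using x(1) k q'pos by (simp add: zero_le_mult_iff)
    moreover have "int q' * k < int q' * int g" using x(2) by (simp only: k qq)
    then have "k < int g" using q'pos by (simp add: mult_less_cancel_left_pos)
    ultimately have "nat k \<in> {0..<g}" "x = int q' * int (nat k)" using k by auto
    then show "x \<in> (\<lambda>k. int q' * int k) ` {0..<g}" by blast
  next
    fix x assume "x \<in> (\<lambda>k. int q' * int k) ` {0..<g}"
    then obtain k where k: "k < g" "x = int q' * int k" by auto
    have "int k < int g" using k(1) by simp
    then have "int q' * int k < int q' * int g" using qpos' by (simp add: mult_less_cancel_left_pos)
    then have "x < int q" by (simp only: k qq)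
    moreover have "0 \<le> x" using k by simp
    moreover have "int q dvd int n * x" using key k by simp
    ultimately show "x \<in> {x \<in> carrier (integer_mod_group q). x [^]\<^bsub>integer_mod_group q\<^esub> n = \<one>\<^bsub>integer_mod_group q\<^esub>}"
      using mem by blast
  qed
  moreover have "inj_on (\<lambda>k. int q' * int k) {0..<g}"
    using qpos' by (simp add: inj_on_def)
  ultimately have "cnt (integer_mod_group q) n = g" unfolding cnt_def by (simp add: card_image)
  then show ?thesis unfolding g_def .
qed

lemma cnt_list:
  assumes "\<forall>q \<in> set qs. q > 0"
  shows "cnt (DirProd_list (map integer_mod_group qs)) n = prod_list (map (gcd n) qs)"
  using assms
proof (induction qs)
  case Nil then show ?case by (simp add: cnt_DirProd_list_Nil)
next
  case (Cons q qs)
  have "cnt (DirProd_list (integer_mod_group q # map integer_mod_group qs)) n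
     = cnt (integer_mod_group q) n * cnt (DirProd_list (map integer_mod_group qs)) n"
    by (rule cnt_DirProd_list_Cons) simp_all
  then show ?case using Cons by (simp add: cnt_mod_group)
qed

definition b2 :: "nat \<Rightarrow> nat \<Rightarrow> nat" where
  "b2 j q = (if (2::nat) ^ j dvd q then 1 else 0)"

lemma gcd2: "gcd 2 (q::nat) = 2 ^ b2 1 q"
proof -
  have "gcd 2 q = gcd 2 (q mod 2)" by (metis gcd_red_nat gcd.commute)
  moreover have "q mod 2 = 0 \<or> q mod 2 = 1" by auto
  ultimately show ?thesis unfolding b2_def by (auto simp: dvd_eq_mod_eq_0)
qed

lemma gcd_small4: "r < 4 \<Longrightarrow> gcd (4::nat) r = 2 ^ ((if 2 dvd r then 1 else 0) + (if 4 dvd r then 1 else 0))"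
proof -
  assume "r < 4"
  then have "r = 0 \<or> r = 1 \<or> r = 2 \<or> r = 3" by auto
  then show ?thesis by (elim disjE) (simp_all add: gcd_non_0_nat)
qed

lemma gcd_small8: "r < 8 \<Longrightarrow> gcd (8::nat) r = 2 ^ ((if 2 dvd r then 1 else 0) + (if 4 dvd r then 1 else 0) + (if 8 dvd r then 1 else 0))"
proof -
  assume "r < 8"
  then have "r = 0 \<or> r = 1 \<or> r = 2 \<or> r = 3 \<or> r = 4 \<or> r = 5 \<or> r = 6 \<or> r = 7" by auto
  then show ?thesis by (elim disjE) (simp_all add: gcd_non_0_nat)
qed

lemma gcd4: "gcd 4 (q::nat) = 2 ^ (b2 1 q + b2 2 q)"
proof -
  have "gcd 4 q = gcd 4 (q mod 4)" by (metis gcd_red_nat gcd.commute)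
  moreover have "(2::nat) dvd q \<longleftrightarrow> 2 dvd (q mod 4)" by (simp add: dvd_mod_iff)
  moreover have "(4::nat) dvd q \<longleftrightarrow> 4 dvd (q mod 4)" by (simp add: dvd_mod_iff)
  moreover have "q mod 4 < 4" by simp
  ultimately show ?thesis unfolding b2_def using gcd_small4[of "q mod 4"] by simp
qed

lemma gcd8: "gcd 8 (q::nat) = 2 ^ (b2 1 q + b2 2 q + b2 3 q)"
proof -
  have "gcd 8 q = gcd 8 (q mod 8)" by (metis gcd_red_nat gcd.commute)
  moreover have "(2::nat) dvd q \<longleftrightarrow> 2 dvd (q mod 8)" by (simp add: dvd_mod_iff)
  moreover have "(4::nat) dvd q \<longleftrightarrow> 4 dvd (q mod 8)" by (simp add: dvd_mod_iff)
  moreover have "(8::nat) dvd q \<longleftrightarrow> 8 dvd (q mod 8)" by (simp add: dvd_mod_iff)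
  moreover have "q mod 8 < 8" by simp
  ultimately show ?thesis unfolding b2_def using gcd_small8[of "q mod 8"] by simp
qed

lemma prod_pow2:
  assumes "\<And>q. g q = (2::nat) ^ e q"
  shows "prod_list (map g qs) = 2 ^ sum_list (map e qs)"
  by (induction qs) (simp_all add: assms power_add)

lemma pp2:
  assumes "prime_power q" "(2::nat) dvd q"
  shows "\<exists>k\<ge>1. q = 2 ^ k"
proof -
  obtain p k where pk: "Factorial_Ring.prime p" "k \<ge> 1" "q = p ^ k" using assms(1) unfolding prime_power_def by blast
  have "2 dvd p" using assms(2) pk prime_dvd_power[of 2 p k] by simp
  then have "p = 2" using pk(1) unfolding prime_nat_iff by force
  then show ?thesis using pk by blast
qed

lemma b2_pow: "b2 j (2 ^ k) = (if j \<le> k then 1 else 0)"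
  unfolding b2_def by (simp add: dvd_power_iff_le)

lemma pp_step:
  assumes "prime_power q"
  shows "b2 1 q = b2 2 q + (if q = 2 then 1 else 0)" "b2 2 q = b2 3 q + (if q = 4 then 1 else 0)"
proof -
  have "b2 1 q = b2 2 q + (if q = 2 then 1 else 0) \<and> b2 2 q = b2 3 q + (if q = 4 then 1 else 0)"
  proof (cases "(2::nat) dvd q")
    case True
    then obtain k where k: "k \<ge> 1" "q = 2 ^ k" using pp2 assms by blast
    have "k = 1 \<or> k = 2 \<or> k \<ge> 3" using k by auto
    moreover have "(2::nat) ^ k = 2 ^ 1 \<longleftrightarrow> k = 1" by (rule power_inject_exp) simp
    moreover have "(2::nat) ^ k = 2 ^ 2 \<longleftrightarrow> k = 2" by (rule power_inject_exp) simp
    ultimately show ?thesis unfolding k(2) b2_pow by auto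
  next
    case False
    have nd: "\<not> (2::nat) ^ j dvd q" if "j \<ge> 1" for j
    proof
      assume a: "(2::nat) ^ j dvd q"
      have "(2::nat) ^ 1 dvd 2 ^ j" by (rule le_imp_power_dvd) (use that in simp)
      then have "2 dvd q" using dvd_trans[OF _ a] by simp
      then show False using False by simp
    qed
    moreover have "q \<noteq> 2" "q \<noteq> 4" using False by auto
    have "b2 1 q = 0" "b2 2 q = 0" "b2 3 q = 0" unfolding b2_def using nd[of 1] nd[of 2] nd[of 3] by simp_all
    then show ?thesis using \<open>q \<noteq> 2\<close> \<open>q \<noteq> 4\<close> by simp
  qed
  then show "b2 1 q = b2 2 q + (if q = 2 then 1 else 0)" "b2 2 q = b2 3 q + (if q = 4 then 1 else 0)"
    by auto
qed

lemma count_sums: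
  assumes "\<forall>q \<in> set qs. prime_power q"
  shows "sum_list (map (b2 1) qs) = sum_list (map (b2 2) qs) + count_list qs 2 \<and>
         sum_list (map (b2 2) qs) = sum_list (map (b2 3) qs) + count_list qs 4"
  using assms
proof (induction qs)
  case Nil
  show ?case by simp
next
  case (Cons q qs)
  have pq: "prime_power q" using Cons.prems by simp
  show ?case using Cons pp_step[OF pq] by simp
qed

lemma final_nt:
  fixes qs :: "nat list" and dn Dn mm :: nat
  assumes pp: "\<forall>q\<in>set qs. prime_power q"
  and E1: "prod_list (map (gcd 2) qs) = gcd 2 dn * gcd 2 Dn"
  and E2: "prod_list (map (gcd 4) qs) = gcd 4 dn * gcd 4 Dn"
  and E3: "prod_list (map (gcd 8) qs) = gcd 8 dn * gcd 8 Dn"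
  and D: "Dn = dn * mm" and mm: "odd mm \<or> 8 dvd mm" and n16: "\<not> 16 dvd Dn"
  shows "even (count_list qs 2) \<and> even (count_list qs 4)"
proof -
  define S1 where "S1 = sum_list (map (b2 1) qs)"
  define S2 where "S2 = sum_list (map (b2 2) qs)"
  define S3 where "S3 = sum_list (map (b2 3) qs)"
  have P1: "prod_list (map (gcd 2) qs) = 2 ^ S1" unfolding S1_def by (rule prod_pow2) (rule gcd2)
  have P2: "prod_list (map (gcd 4) qs) = 2 ^ (S1 + S2)" unfolding S1_def S2_def
    by (subst prod_pow2[where e = "\<lambda>q. b2 1 q + b2 2 q"]) (simp_all add: gcd4 sum_list_addf)
  have P3: "prod_list (map (gcd 8) qs) = 2 ^ (S1 + S2 + S3)" unfolding S1_def S2_def S3_def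
    by (subst prod_pow2[where e = "\<lambda>q. b2 1 q + b2 2 q + b2 3 q"]) (simp_all add: gcd8 sum_list_addf)
  have "(2::nat) ^ S1 = 2 ^ (b2 1 dn + b2 1 Dn)" using E1 P1 by (simp add: gcd2 power_add)
  then have e1: "S1 = b2 1 dn + b2 1 Dn" by (simp add: power_inject_exp)
  have "(2::nat) ^ (S1 + S2) = 2 ^ ((b2 1 dn + b2 2 dn) + (b2 1 Dn + b2 2 Dn))" using E2 P2 by (simp add: gcd4 power_add)
  then have e2: "S1 + S2 = (b2 1 dn + b2 2 dn) + (b2 1 Dn + b2 2 Dn)" by (simp only: power_inject_exp)
  have "(2::nat) ^ (S1 + S2 + S3) = 2 ^ ((b2 1 dn + b2 2 dn + b2 3 dn) + (b2 1 Dn + b2 2 Dn + b2 3 Dn))"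
    using E3 P3 by (simp add: gcd8 power_add)
  then have e3: "S1 + S2 + S3 = (b2 1 dn + b2 2 dn + b2 3 dn) + (b2 1 Dn + b2 2 Dn + b2 3 Dn)"
    by (simp only: power_inject_exp)
  have c: "S1 = S2 + count_list qs 2" "S2 = S3 + count_list qs 4"
    using count_sums[OF pp] unfolding S1_def S2_def S3_def by simp_all
  show ?thesis
  proof (cases "odd mm")
    case True
    have r: "b2 j Dn = b2 j dn" for j
    proof -
      have "coprime ((2::nat) ^ j) mm" using True by simp
      then have "(2::nat) ^ j dvd dn * mm \<longleftrightarrow> 2 ^ j dvd dn" by (simp add: coprime_dvd_mult_left_iff)
      then show ?thesis unfolding b2_def D by simp
    qed
    have s1: "S1 = 2 * b2 1 dn" using e1 r[of 1] by simp
    have s2: "S2 = 2 * b2 2 dn" using e1 e2 r[of 1] r[of 2] by simp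
    have s3: "S3 = 2 * b2 3 dn" using e1 e2 e3 r[of 1] r[of 2] r[of 3] by simp
    have "even (count_list qs 2)" using c(1) s1 s2 by presburger
    moreover have "even (count_list qs 4)" using c(2) s2 s3 by presburger
    ultimately show ?thesis by blast
  next
    case False
    then have m8: "8 dvd mm" using mm by simp
    have "odd dn"
    proof
      assume "even dn"
      then obtain k where k: "dn = 2 * k" by blast
      obtain l where l: "mm = 8 * l" using m8 by blast
      have "Dn = 16 * (k * l)" unfolding D k l by simp
      then have "16 dvd Dn" by simp
      then show False using n16 by blast
    qed
    have z: "b2 j dn = 0" if "j \<ge> 1" for j
    proof -
      have "(2::nat) ^ 1 dvd 2 ^ j" by (rule le_imp_power_dvd) (use that in simp)
      have "\<not> (2::nat) ^ j dvd dn"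
      proof
        assume "(2::nat) ^ j dvd dn"
        with \<open>(2::nat) ^ 1 dvd 2 ^ j\<close> have "(2::nat) ^ 1 dvd dn" by (rule dvd_trans)
        then show False using \<open>odd dn\<close> by simp
      qed
      then show ?thesis unfolding b2_def by simp
    qed
    have o: "b2 j Dn = 1" if "j \<ge> 1" "j \<le> 3" for j
    proof -
      have "(2::nat) ^ j dvd 2 ^ 3" by (rule le_imp_power_dvd) (use that in simp)
      moreover have "(2::nat) ^ 3 dvd mm" using m8 by simp
      ultimately have "(2::nat) ^ j dvd mm" by (rule dvd_trans)
      then have "(2::nat) ^ j dvd Dn" unfolding D by simp
      then show ?thesis unfolding b2_def by simp
    qed
    show ?thesis using e1 e2 e3 c z[of 1] z[of 2] z[of 3] o[of 1] o[of 2] o[of 3] by simp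
  qed
qed

lemma odd_sq_mod8:
  fixes x :: int
  assumes "odd x"
  shows "x^2 mod 8 = 1"
proof -
  have "x^2 mod 8 = (x mod 8)^2 mod 8" by (simp add: power_mod)
  moreover have "odd (x mod 8)" using assms by (simp add: dvd_mod_iff)
  moreover have "x mod 8 \<ge> 0" "x mod 8 < 8" by simp_all
  ultimately have "x mod 8 = 1 \<or> x mod 8 = 3 \<or> x mod 8 = 5 \<or> x mod 8 = 7" by presburger
  then show ?thesis using \<open>x^2 mod 8 = (x mod 8)^2 mod 8\<close> by auto
qed

lemma parity_m:
  fixes a1 b1 :: int
  assumes "coprime a1 b1"
  shows "odd (a1^2 - b1^2) \<or> 8 dvd (a1^2 - b1^2)"
proof (cases "odd a1 \<and> odd b1")
  case True
  have "(a1^2 - b1^2) mod 8 = (a1^2 mod 8 - b1^2 mod 8) mod 8" by (simp add: mod_diff_eq)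
  also have "\<dots> = 0" using True odd_sq_mod8 by simp
  finally show ?thesis by (simp add: dvd_eq_mod_eq_0)
next
  case False
  have "\<not> (even a1 \<and> even b1)"
  proof
    assume "even a1 \<and> even b1"
    then have "2 dvd gcd a1 b1" by simp
    then show False using assms by simp
  qed
  then have "odd (a1^2 - b1^2)" using False by auto
  then show ?thesis by simp
qed

lemma presented_iso:
  fixes a b :: int
  assumes ne: "a ^ 2 - b ^ 2 \<noteq> 0"
  shows "\<exists>dn Dn mm h. dn > 0 \<and> Dn > 0 \<and> Dn = dn * mm \<and> (odd mm \<or> 8 dvd mm) \<and>
     h \<in> iso (presented_group a b) (integer_mod_group dn \<times>\<times> integer_mod_group Dn) \<and>
     group (presented_group a b)"
proof -
  define d where "d = gcd a b"
  have ab: "a \<noteq> 0 \<or> b \<noteq> 0" using ne by auto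
  have dpos: "d > 0" unfolding d_def using ab by simp
  obtain a1 where a1: "a = d * a1" unfolding d_def by (rule dvdE[OF gcd_dvd1])
  obtain b1 where b1: "b = d * b1" unfolding d_def by (rule dvdE[OF gcd_dvd2])
  have "\<bar>d\<bar> * gcd a1 b1 = gcd (d * a1) (d * b1)" by (rule gcd_mult_distrib_int)
  also have "\<dots> = gcd a b" by (simp only: a1[symmetric] b1[symmetric])
  also have "\<dots> = d" by (simp only: d_def)
  finally have g1: "gcd a1 b1 = 1" using dpos by simp
  then have cop: "coprime a1 b1" by (simp add: coprime_iff_gcd_eq_1)
  obtain u v where uv0: "u * a1 + v * b1 = gcd a1 b1" using bezout_int by blast
  have rel: "u * a1 + v * b1 = 1" using uv0 g1 by simp
  define m where "m = a1 ^ 2 - b1 ^ 2"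
  have "a ^ 2 - b ^ 2 = d ^ 2 * m" unfolding a1 b1 m_def by (simp add: power_mult_distrib algebra_simps)
  then have mne: "m \<noteq> 0" using ne by auto
  define D where "D = d * \<bar>m\<bar>"
  have Dpos: "D > 0" unfolding D_def using dpos mne by simp
  define dn where "dn = nat d"
  define Dn where "Dn = nat D"
  define mm where "mm = nat \<bar>m\<bar>"
  have dn: "int dn = d" unfolding dn_def using dpos by simp
  have Dn: "int Dn = D" unfolding Dn_def using Dpos by simp
  have dnpos: "dn > 0" using dn dpos by simp
  have Dnpos: "Dn > 0" using Dn Dpos by simp
  have Dmm: "Dn = dn * mm" unfolding Dn_def dn_def mm_def D_def using dpos by (simp add: nat_mult_distrib)
  have mmpar: "odd mm \<or> 8 dvd mm"
  proof -
    have mmi: "int mm = \<bar>m\<bar>" unfolding mm_def by simp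
    have "odd m \<or> 8 dvd m" using parity_m[OF cop] unfolding m_def .
    then show ?thesis
    proof
      assume "odd m"
      then have "odd (int mm)" unfolding mmi by simp
      then show ?thesis by simp
    next
      assume "8 dvd m"
      then have "int 8 dvd int mm" unfolding mmi by simp
      then have "8 dvd mm" by (simp only: of_nat_dvd_iff)
      then show ?thesis by blast
    qed
  qed
  define G0 where "G0 = integer_group \<times>\<times> integer_group"
  define H where "H = integer_mod_group dn \<times>\<times> integer_mod_group Dn"
  define \<phi> where "\<phi> = (\<lambda>p::int \<times> int. ((- v * fst p - u * snd p) mod d, (a1 * fst p - b1 * snd p) mod D))"
  have cG0: "carrier G0 = UNIV" unfolding G0_def by simp
  have cH: "carrier H = {0..<d} \<times> {0..<D}" unfolding H_def using dnpos Dnpos dn Dn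
    by (simp add: carrier_integer_mod_group)
  have mG0: "p \<otimes>\<^bsub>G0\<^esub> q = (fst p + fst q, snd p + snd q)" for p q
    unfolding G0_def by (simp add: mult_DirProd')
  have mH: "p \<otimes>\<^bsub>H\<^esub> q = ((fst p + fst q) mod d, (snd p + snd q) mod D)" for p q
    unfolding H_def by (simp add: mult_DirProd' dn Dn)
  have oneH: "\<one>\<^bsub>H\<^esub> = (0, 0)" unfolding H_def by simp
  have grG0: "group G0" unfolding G0_def by (intro DirProd_group group_integer_group)
  have grH: "group H" unfolding H_def by (intro DirProd_group group_integer_mod_group)
  have hom: "\<phi> \<in> hom G0 H"
  proof (rule homI)
    fix p assume "p \<in> carrier G0"
    show "\<phi> p \<in> carrier H" unfolding cH \<phi>_def using dpos Dpos by simp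
  next
    fix p q assume "p \<in> carrier G0" "q \<in> carrier G0"
    have e1: "(- v * (fst p + fst q) - u * (snd p + snd q)) mod d
        = ((- v * fst p - u * snd p) mod d + (- v * fst q - u * snd q) mod d) mod d"
      unfolding mod_add_eq by (simp add: algebra_simps)
    have e2: "(a1 * (fst p + fst q) - b1 * (snd p + snd q)) mod D
        = ((a1 * fst p - b1 * snd p) mod D + (a1 * fst q - b1 * snd q) mod D) mod D"
      unfolding mod_add_eq by (simp add: algebra_simps)
    show "\<phi> (p \<otimes>\<^bsub>G0\<^esub> q) = \<phi> p \<otimes>\<^bsub>H\<^esub> \<phi> q"
      unfolding mG0 mH \<phi>_def using e1 e2 by simp
  qed
  have gh: "group_hom G0 H \<phi>" unfolding group_hom_def group_hom_axioms_def using grG0 grH hom by blast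
  have surj: "\<phi> ` carrier G0 = carrier H"
  proof (intro equalityI subsetI)
    fix y assume "y \<in> \<phi> ` carrier G0"
    then show "y \<in> carrier H" unfolding cH \<phi>_def using dpos Dpos by auto
  next
    fix y assume y: "y \<in> carrier H"
    obtain c1 c2 where c: "y = (c1, c2)" by (cases y)
    have c1: "0 \<le> c1" "c1 < d" and c2: "0 \<le> c2" "c2 < D" using y unfolding c cH by auto
    define p where "p = (- b1 * c1 + u * c2, - a1 * c1 - v * c2)"
    have "- v * fst p - u * snd p = c1 * (u * a1 + v * b1)" unfolding p_def by (simp add: algebra_simps)
    then have f1: "- v * fst p - u * snd p = c1" using rel by simp
    have "a1 * fst p - b1 * snd p = c2 * (u * a1 + v * b1)" unfolding p_def by (simp add: algebra_simps)
    then have f2: "a1 * fst p - b1 * snd p = c2" using rel by simp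
    have "\<phi> p = y" unfolding \<phi>_def f1 f2 c using c1 c2 by simp
    then show "y \<in> \<phi> ` carrier G0" unfolding cG0 by blast
  qed
  have ker: "kernel G0 H \<phi> = matrix_image a b"
  proof (intro equalityI subsetI)
    fix p assume "p \<in> kernel G0 H \<phi>"
    then have "\<phi> p = (0, 0)" unfolding kernel_def oneH by simp
    then have "(- v * fst p - u * snd p) mod d = 0" "(a1 * fst p - b1 * snd p) mod D = 0"
      unfolding \<phi>_def by simp_all
    then have "d dvd (- v * fst p - u * snd p)" "D dvd (a1 * fst p - b1 * snd p)"
      by (simp_all add: dvd_eq_mod_eq_0)
    then obtain S T' where S: "- v * fst p - u * snd p = d * S" and T': "a1 * fst p - b1 * snd p = D * T'"
      by (auto elim!: dvdE)
    define T where "T = sgn m * T'"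
    have T: "a1 * fst p - b1 * snd p = d * m * T"
      unfolding T' D_def T_def abs_sgn[of m] by (simp only: mult.assoc)
    define x where "x = fst p"
    define y where "y = snd p"
    have Sx: "- v * x - u * y = d * S" using S unfolding x_def y_def .
    have Tx: "a1 * x - b1 * y = d * m * T" using T unfolding x_def y_def .
    define XX where "XX = T"
    define YY where "YY = - S - (u * b1 + v * a1) * T"
    have "x = (u * a1 + v * b1) * x" using rel by simp
    also have "\<dots> = - b1 * (- v * x - u * y) + u * (a1 * x - b1 * y)" by (simp add: algebra_simps)
    also have "\<dots> = - b1 * (d * S) + u * (d * m * T)" unfolding Sx Tx ..
    also have "\<dots> = a * XX + b * YY + d * T * a1 * (u * a1 + v * b1 - 1)"
      unfolding a1 b1 XX_def YY_def m_def by (simp add: algebra_simps power2_eq_square)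
    also have "\<dots> = a * XX + b * YY" using rel by simp
    finally have ex: "x = a * XX + b * YY" .
    have "y = (u * a1 + v * b1) * y" using rel by simp
    also have "\<dots> = - a1 * (- v * x - u * y) - v * (a1 * x - b1 * y)" by (simp add: algebra_simps)
    also have "\<dots> = - a1 * (d * S) - v * (d * m * T)" unfolding Sx Tx ..
    also have "\<dots> = b * XX + a * YY + d * T * b1 * (u * a1 + v * b1 - 1)"
      unfolding a1 b1 XX_def YY_def m_def by (simp add: algebra_simps power2_eq_square)
    also have "\<dots> = b * XX + a * YY" using rel by simp
    finally have ey: "y = b * XX + a * YY" .
    have "p = (a * XX + b * YY, b * XX + a * YY)" using ex ey unfolding x_def y_def by (cases p) simp
    then show "p \<in> matrix_image a b" unfolding matrix_image_def by blast
  next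
    fix p assume "p \<in> matrix_image a b"
    then obtain XX YY where p: "p = (a * XX + b * YY, b * XX + a * YY)" unfolding matrix_image_def by blast
    have "- v * fst p - u * snd p = d * (- (v * a1 * XX + v * b1 * YY + u * b1 * XX + u * a1 * YY))"
      unfolding p a1 b1 by (simp add: algebra_simps)
    then have z1: "(- v * fst p - u * snd p) mod d = 0" by simp
    have "a1 * fst p - b1 * snd p = d * m * XX"
      unfolding p a1 b1 m_def by (simp add: algebra_simps power2_eq_square)
    also have "\<dots> = (d * \<bar>m\<bar>) * (sgn m * XX)" unfolding abs_sgn[of m] using mne by (simp add: mult.assoc)
    finally have "a1 * fst p - b1 * snd p = (d * \<bar>m\<bar>) * (sgn m * XX)" .
    then have z2: "(a1 * fst p - b1 * snd p) mod D = 0" unfolding D_def by simp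
    show "p \<in> kernel G0 H \<phi>" unfolding kernel_def oneH cG0 \<phi>_def using z1 z2 by simp
  qed
  have iso: "(\<lambda>XX. the_elem (\<phi> ` XX)) \<in> iso (G0 Mod kernel G0 H \<phi>) H"
    by (rule group_hom.FactGroup_iso_set[OF gh surj])
  have grP: "group (G0 Mod kernel G0 H \<phi>)"
    by (rule normal.factorgroup_is_group[OF group_hom.normal_kernel[OF gh]])
  have P: "presented_group a b = G0 Mod kernel G0 H \<phi>" unfolding presented_group_def ker by (simp only: G0_def)
  show ?thesis using dnpos Dnpos Dmm mmpar iso grP unfolding P H_def by blast
qed

lemma iso_pow_one:
  assumes G: "group G" and H: "group H" and h: "h \<in> iso G H" and x: "x \<in> carrier G"
  shows "(h x [^]\<^bsub>H\<^esub> (n::nat) = \<one>\<^bsub>H\<^esub>) \<longleftrightarrow> (x [^]\<^bsub>G\<^esub> n = \<one>\<^bsub>G\<^esub>)"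
proof -
  have hom: "h \<in> hom G H" and inj: "inj_on h (carrier G)"
    using h unfolding iso_iff by blast+
  have gh: "group_hom G H h" unfolding group_hom_def group_hom_axioms_def using G H hom by blast
  have pw: "h (x [^]\<^bsub>G\<^esub> n) = h x [^]\<^bsub>H\<^esub> n" by (rule group_hom.hom_nat_pow[OF gh x])
  have one: "h \<one>\<^bsub>G\<^esub> = \<one>\<^bsub>H\<^esub>" by (rule group_hom.hom_one[OF gh])
  have MG: "monoid G" by (rule group.is_monoid[OF G])
  show ?thesis
  proof
    assume "h x [^]\<^bsub>H\<^esub> n = \<one>\<^bsub>H\<^esub>"
    then have "h (x [^]\<^bsub>G\<^esub> n) = h \<one>\<^bsub>G\<^esub>" using pw one by simp
    moreover have "x [^]\<^bsub>G\<^esub> n \<in> carrier G" by (rule monoid.nat_pow_closed[OF MG x])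
    moreover have "\<one>\<^bsub>G\<^esub> \<in> carrier G" by (rule monoid.one_closed[OF MG])
    ultimately show "x [^]\<^bsub>G\<^esub> n = \<one>\<^bsub>G\<^esub>" by (rule inj_onD[OF inj])
  next
    assume "x [^]\<^bsub>G\<^esub> n = \<one>\<^bsub>G\<^esub>"
    then show "h x [^]\<^bsub>H\<^esub> n = \<one>\<^bsub>H\<^esub>" using pw one by simp
  qed
qed

lemma ord16:
  assumes G: "group G" and H: "group H" and h: "h \<in> iso G H" and x: "x \<in> carrier G"
    and e: "\<And>n::nat. h x [^]\<^bsub>H\<^esub> n = \<one>\<^bsub>H\<^esub> \<longleftrightarrow> 16 dvd n"
  shows "group.ord G x = 16"
proof -
  have "x [^]\<^bsub>G\<^esub> n = \<one>\<^bsub>G\<^esub> \<longleftrightarrow> 16 dvd n" for n :: nat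
    using iso_pow_one[OF G H h x, of n] e[of n] by simp
  then have o: "group.ord G x dvd n \<longleftrightarrow> 16 dvd n" for n :: nat
    using group.pow_eq_id[OF G x, of n] by simp
  have "group.ord G x dvd 16" using o[of 16] by simp
  moreover have "16 dvd group.ord G x" using o[of "group.ord G x"] by simp
  ultimately
  show ?thesis by (rule dvd_antisym)
qed

theorem mainTheorem9:
  fixes a b :: int
  assumes "a ^ 2 - b ^ 2 \<noteq> 0"
  shows "(\<exists>x \<in> carrier (presented_group a b). group.ord (presented_group a b) x = 16)
         \<or> (\<forall>qs. (\<forall>q \<in> set qs. prime_power q)
                  \<and> presented_group a b \<cong> DirProd_list (map integer_mod_group qs)
                \<longrightarrow> even (count_list qs 2) \<and> even (count_list qs 4))"
proof -
  obtain dn Dn mm h where dn: "dn > 0" and Dn: "Dn > 0" and Dmm: "Dn = dn * mm"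
    and mm: "odd mm \<or> 8 dvd mm"
    and h: "h \<in> iso (presented_group a b) (integer_mod_group dn \<times>\<times> integer_mod_group Dn)"
    and gP: "group (presented_group a b)"
    using presented_iso[OF assms] by blast
  define H where "H = integer_mod_group dn \<times>\<times> integer_mod_group Dn"
  have gH: "group H" unfolding H_def by (intro DirProd_group group_integer_mod_group)
  have hH: "h \<in> iso (presented_group a b) H" using h unfolding H_def .
  have cntH: "cnt (presented_group a b) k = gcd k dn * gcd k Dn" for k
  proof -
    have "cnt (presented_group a b) k = cnt H k" by (rule cnt_iso[OF gP gH hH])
    also have "\<dots> = cnt (integer_mod_group dn) k * cnt (integer_mod_group Dn) k"
      unfolding H_def by (rule cnt_DirProd)
    also have "\<dots> = gcd k dn * gcd k Dn" using dn Dn by (simp add: cnt_mod_group)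
    finally show ?thesis .
  qed
  show ?thesis
  proof (cases "16 dvd Dn")
    case True
    then obtain k where k: "Dn = 16 * k" by blast
    have kpos: "k > 0" using k Dn by simp
    define e where "e = ((0::int), int k)"
    have "int k < int Dn" using k kpos by simp
    then have eH: "e \<in> carrier H" unfolding H_def e_def using dn Dn by (simp add: carrier_integer_mod_group)
    have "e \<in> h ` carrier (presented_group a b)" using hH eH unfolding iso_iff by blast
    then obtain x where x: "x \<in> carrier (presented_group a b)" "h x = e" by blast
    have epow: "h x [^]\<^bsub>H\<^esub> n = \<one>\<^bsub>H\<^esub> \<longleftrightarrow> 16 dvd n" for n :: nat
    proof -
      have "h x [^]\<^bsub>H\<^esub> n = (0, (int n * int k) mod int Dn)"
        unfolding x(2) e_def H_def DirProd_pow by simp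
      moreover have "\<one>\<^bsub>H\<^esub> = (0, 0)" unfolding H_def by simp
      moreover have "(int n * int k) mod int Dn = 0 \<longleftrightarrow> 16 dvd n"
      proof -
        have "(int n * int k) mod int Dn = 0 \<longleftrightarrow> Dn dvd n * k"
          by (simp add: dvd_eq_mod_eq_0 flip: of_nat_mult of_nat_mod)
        also have "\<dots> \<longleftrightarrow> 16 * k dvd n * k" unfolding k ..
        also have "\<dots> \<longleftrightarrow> 16 dvd n" using kpos by simp
        finally show ?thesis .
      qed
      ultimately show ?thesis by simp
    qed
    have "group.ord (presented_group a b) x = 16" by (rule ord16[OF gP gH hH x(1) epow])
    then show ?thesis using x(1) by blast
  next
    case False
    have "even (count_list qs 2) \<and> even (count_list qs 4)"
      if pp: "\<forall>q \<in> set qs. prime_power q"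
        and iso2: "presented_group a b \<cong> DirProd_list (map integer_mod_group qs)" for qs
    proof -
      obtain h2 where h2: "h2 \<in> iso (presented_group a b) (DirProd_list (map integer_mod_group qs))"
        using iso2 unfolding is_iso_def by blast
      have gL: "group (DirProd_list (map integer_mod_group qs))"
        by (rule DirProd_list_is_group) simp
      have qpos: "\<forall>q \<in> set qs. q > 0"
      proof
        fix q assume "q \<in> set qs"
        then have "prime_power q" using pp by blast
        then obtain p k where "Factorial_Ring.prime p" "q = p ^ k" unfolding prime_power_def by blast
        then show "q > 0" by (simp add: prime_gt_0_nat)
      qed
      have E: "prod_list (map (gcd k) qs) = gcd k dn * gcd k Dn" for k
      proof -
        have "prod_list (map (gcd k) qs) = cnt (DirProd_list (map integer_mod_group qs)) k"
          by (rule cnt_list[OF qpos, symmetric])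
        also have "\<dots> = cnt (presented_group a b) k" by (rule cnt_iso[OF gP gL h2, symmetric])
        also have "\<dots> = gcd k dn * gcd k Dn" by (rule cntH)
        finally show ?thesis .
      qed
      show ?thesis by (rule final_nt[OF pp E E E Dmm mm False])
    qed
    then show ?thesis by blast
  qed
qed

end
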